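(* Let $X=\{v_1,\dots,v_n\}$ be a finite set, let $w:X\to\mathbb{R}^+$ be a weight function normalized so that $\min_{v\in X}w(v)=1$, and put $w_{\max}=\max_{v\in X}w(v)$. Let $g:2^X\to\mathbb{R}^+$ be monotone nondecreasing with $g(\emptyset)=0$. Consider the minimum general cover problem: minimize $w(C)=\sum_{x\in C}w(x)$ over $C\subseteq X$ subject to $g(C)=g(X)$. Let $C^*$ be an optimal solution, $opt=w(C^* )$, and \[\delta=\min\{g(C\cup\{v\})-g(C)\;:\; C\subset X,\ v\in X\setminus C,\ g(C\cup\{v\})>g(C)\}.\] Suppose that (i) for every $C\subset X$ with $g(C)<g(X)$ there is $v\in X\setminus C$ with $g(C\cup\{v\})-g(C)>0$; and (ii) there is a constant $p$ such that for every $C\subset X$ the elements of $C^*\setminus C$ can be ordered as $v_1,\dots,v_t,v_{t+1},\dots,v_{\hat t}$, where, writing $C^*_0=\emptyset$ and $C^*_i=\{v_1,\dots,v_i\}$, $t$ is the smallest index with $g(C^*_t\cup C)=g(X)$, and for all $i=1,\dots,t$, \[ g(C^*_{i-1}\cup C\cup\{v_i\})-g(C^*_{i-1}\cup C)\le g(C\cup\{v_i\})-g(C)+p.\] Then the greedy algorithm — which starts with $C=\emptyset$ and, while $g(C)<g(X)$, adds to $C$ an element $b\in\arg\max_{v\in X\setminus C}\frac{g(C\cup\{v\})-g(C)}{w(v)}$ — outputs a feasible set $C$ with \[ w(C)\le \left((p+1)\frac{w_{\max}}{\delta}+\ln\frac{g(X)-p\cdot opt}{opt}\right)opt,\] where the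 term $\ln\frac{g(X)-p\cdot opt}{opt}$ is interpreted as $0$ if $g(X)-(p+1)\cdot opt\le 0$.
   Context: $\mathbb{R}^+$ denotes the positive reals. The normalization that the cheapest element has weight $1$ is a standing convention of the paper (so $w_{\max}$ is the ratio of the largest to the smallest weight). "Approximation ratio" means the ratio of the weight of the returned solution to $opt$. *)

theory Defs
  imports Complex_Main
begin

definition wt :: "('a \<Rightarrow> real) \<Rightarrow> 'a set \<Rightarrow> real" where
  "wt w C = (\<Sum>x\<in>C. w x)"

inductive greedy_reach ::
  "'a set \<Rightarrow> ('a \<Rightarrow> real) \<Rightarrow> ('a set \<Rightarrow> real) \<Rightarrow> 'a set \<Rightarrow> bool"
  for X w g where
  start: "greedy_reach X w g {}"
| step: "greedy_reach X w g C \<Longrightarrow> g C < g X \<Longrightarrow> b \<in> X - C \<Longrightarrow>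
         (\<forall>v\<in>X - C. (g (C \<union> {v}) - g C) / w v \<le> (g (C \<union> {b}) - g C) / w b) \<Longrightarrow>
         greedy_reach X w g (C \<union> {b})"

definition greedy_output ::
  "'a set \<Rightarrow> ('a \<Rightarrow> real) \<Rightarrow> ('a set \<Rightarrow> real) \<Rightarrow> 'a set \<Rightarrow> bool" where
  "greedy_output X w g C \<longleftrightarrow> greedy_reach X w g C \<and> \<not> (g C < g X)"

definition min_gain :: "'a set \<Rightarrow> ('a set \<Rightarrow> real) \<Rightarrow> real" where
  "min_gain X g = Min {g (C \<union> {v}) - g C | C v. C \<subset> X \<and> v \<in> X - C \<and> g (C \<union> {v}) > g C}"

definition order_condition ::
  "'a set \<Rightarrow> ('a set \<Rightarrow> real) \<Rightarrow> 'a set \<Rightarrow> real \<Rightarrow> bool" where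
  "order_condition X g Cs p \<longleftrightarrow>
     (\<forall>C. C \<subset> X \<longrightarrow>
        (\<exists>vs. distinct vs \<and> set vs = Cs - C \<and>
           (let t = (LEAST i. g (set (take i vs) \<union> C) = g X) in
              \<forall>i\<in>{1..t}.
                g (set (take (i - 1) vs) \<union> C \<union> {vs ! (i - 1)}) - g (set (take (i - 1) vs) \<union> C)
                  \<le> g (C \<union> {vs ! (i - 1)}) - g C + p)))"

end

theory Submission imports Defs begin

lemma phi_step:
  fixes opt D w R R' :: real
  assumes opt: "opt > 0" and w: "w > 0" and RR: "R' < R" and h1: "w \<le> D*(R-R')"
    and h2: "w*R \<le> opt*(R-R')"
  shows "w \<le> (opt*ln(max R opt/opt) + D*min R opt) - (opt*ln(max R' opt/opt) + D*min R' opt)"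
proof (cases "R \<le> opt")
  case True
  then show ?thesis using RR h1 by (simp add: max_def min_def right_diff_distrib)
next
  case False
  hence Ro: "R > opt" by simp
  show ?thesis
  proof (cases "opt \<le> R'")
    case True
    have Rp: "R' > 0" "R > 0" using True opt Ro by auto
    have "R'/R \<le> 1 - w/opt" using h2 opt Rp by (simp add: field_simps)
    moreover have "ln (R'/R) \<le> R'/R - 1" using Rp by (intro ln_le_minus_one) simp
    ultimately have "ln (R'/R) \<le> - (w/opt)" by linarith
    hence "w/opt \<le> ln R - ln R'" using Rp by (simp add: ln_div)
    hence "w \<le> opt * (ln R - ln R')" using opt by (simp add: field_simps)
    moreover have "max R opt = R" "max R' opt = R'" "min R opt = opt" "min R' opt = opt"
      using True Ro by auto
    ultimately show ?thesis using Rp opt by (simp add: ln_div algebra_simps)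
  next
    case False
    hence R'o: "R' < opt" by simp
    have Rp: "R > 0" using Ro opt by simp
    have d: "R - R' > 0" using RR by simp
    have e1: "w*(opt-R')/(R-R') \<le> D*(opt-R')"
    proof -
      have "w/(R-R') \<le> D" using h1 d by (simp add: field_simps)
      hence "w/(R-R') * (opt-R') \<le> D*(opt-R')" using R'o by (intro mult_right_mono) auto
      thus ?thesis by simp
    qed
    have e2: "w*(R-opt)/(R-R') \<le> opt*(R-opt)/R"
    proof -
      have "w/(R-R') \<le> opt/R" using h2 d Rp by (simp add: field_simps)
      hence "w/(R-R') * (R-opt) \<le> opt/R*(R-opt)" using Ro by (intro mult_right_mono) auto
      thus ?thesis by simp
    qed
    have e3: "opt*(R-opt)/R \<le> opt * ln (R/opt)"
    proof -
      have "ln (opt/R) \<le> opt/R - 1" using Rp opt by (intro ln_le_minus_one) simp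
      hence "1 - opt/R \<le> ln (R/opt)" using Rp opt by (simp add: ln_div)
      hence "opt*(1 - opt/R) \<le> opt * ln (R/opt)" using opt by simp
      thus ?thesis using Rp by (simp add: field_simps)
    qed
    have "w*(R-opt)/(R-R') + w*(opt-R')/(R-R') = (w*(R-opt) + w*(opt-R'))/(R-R')"
      by (rule add_divide_distrib[symmetric])
    also have "\<dots> = w*(R-R')/(R-R')" by (simp add: algebra_simps)
    also have "\<dots> = w" using d by simp
    finally have "w = w*(R-opt)/(R-R') + w*(opt-R')/(R-R')" by simp
    also have "\<dots> \<le> opt * ln (R/opt) + D*(opt-R')" using e1 e2 e3 by linarith
    finally show ?thesis using Ro R'o opt by (simp add: max_def min_def right_diff_distrib)
  qed
qed

lemma step_bound:
  fixes X :: "'a set" and w :: "'a \<Rightarrow> real" and g :: "'a set \<Rightarrow> real"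
    and Cs :: "'a set" and p :: real
  assumes finX: "finite X"
    and w1: "\<forall>v\<in>X. w v \<ge> 1"
    and gmono: "\<forall>A B. A \<subseteq> B \<and> B \<subseteq> X \<longrightarrow> g A \<le> g B"
    and Cs_feas: "Cs \<subseteq> X" "g Cs = g X"
    and cond_i: "\<forall>C. C \<subset> X \<and> g C < g X \<longrightarrow> (\<exists>v\<in>X - C. g (C \<union> {v}) - g C > 0)"
    and cond_ii: "order_condition X g Cs p"
    and p0: "p \<ge> 0"
    and C: "C \<subset> X" "g C < g X" and b: "b \<in> X - C"
    and bmax: "\<forall>v\<in>X - C. (g (C \<union> {v}) - g C) / w v \<le> (g (C \<union> {b}) - g C) / w b"
  shows "w b * (g X - g C - p * wt w Cs) \<le> wt w Cs * (g (C \<union> {b}) - g C)"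
proof -
  define r where "r = (g (C \<union> {b}) - g C) / w b"
  have wbpos: "w b > 0" using w1 b by force
  obtain v0 where v0: "v0 \<in> X - C" "g (C \<union> {v0}) - g C > 0" using cond_i C by blast
  have "w v0 > 0" using w1 v0 by force
  hence "(g (C \<union> {v0}) - g C) / w v0 > 0" using v0 by simp
  hence r0: "r \<ge> 0" using bmax v0 unfolding r_def by force
  have finCs: "finite Cs" using Cs_feas finX finite_subset by blast
  obtain vs where vs: "distinct vs" "set vs = Cs - C" and
    tcond: "let t = (LEAST i. g (set (take i vs) \<union> C) = g X) in
              \<forall>i\<in>{1..t}.
                g (set (take (i - 1) vs) \<union> C \<union> {vs ! (i - 1)}) - g (set (take (i - 1) vs) \<union> C)
                  \<le> g (C \<union> {vs ! (i - 1)}) - g C + p"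
    using cond_ii C unfolding order_condition_def by blast
  define t where "t = (LEAST i. g (set (take i vs) \<union> C) = g X)"
  have tc: "\<forall>i\<in>{1..t}.
                g (set (take (i - 1) vs) \<union> C \<union> {vs ! (i - 1)}) - g (set (take (i - 1) vs) \<union> C)
                  \<le> g (C \<union> {vs ! (i - 1)}) - g C + p" using tcond unfolding t_def Let_def by simp
  have full: "g (set (take (length vs) vs) \<union> C) = g X"
  proof -
    have e: "set (take (length vs) vs) \<union> C = Cs \<union> C" using vs by auto
    have "g Cs \<le> g (Cs \<union> C)" using gmono Cs_feas C
      by (metis Un_least Un_upper1 psubsetE)
    moreover have "g (Cs \<union> C) \<le> g X" using gmono Cs_feas C
      by (metis Un_least order_refl psubsetE)
    ultimately show ?thesis using e Cs_feas by simp
  qed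
  have tlen: "t \<le> length vs" unfolding t_def by (rule Least_le) (rule full)
  have gt: "g (set (take t vs) \<union> C) = g X" unfolding t_def by (rule LeastI) (rule full)
  define f where "f k = g (set (take k vs) \<union> C)" for k
  have tele: "(\<Sum>i\<in>{1..t}. g (set (take (i - 1) vs) \<union> C \<union> {vs ! (i - 1)}) - g (set (take (i - 1) vs) \<union> C))
      = g X - g C"
  proof -
    have "(\<Sum>i\<in>{1..t}. g (set (take (i - 1) vs) \<union> C \<union> {vs ! (i - 1)}) - g (set (take (i - 1) vs) \<union> C))
       = (\<Sum>k<t. g (set (take k vs) \<union> C \<union> {vs ! k}) - g (set (take k vs) \<union> C))"
      using sum.atLeast1_atMost_eq[of "\<lambda>i. g (set (take (i - 1) vs) \<union> C \<union> {vs ! (i - 1)}) - g (set (take (i - 1) vs) \<union> C)" t]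
      by simp
    also have "\<dots> = (\<Sum>k<t. f (Suc k) - f k)"
    proof (rule sum.cong)
      fix k assume "k \<in> {..<t}"
      hence "k < length vs" using tlen by simp
      hence "set (take (Suc k) vs) = set (take k vs) \<union> {vs ! k}" by (simp add: take_Suc_conv_app_nth)
      thus "g (set (take k vs) \<union> C \<union> {vs ! k}) - g (set (take k vs) \<union> C) = f (Suc k) - f k"
        unfolding f_def by (metis Un_assoc Un_commute)
    qed simp
    also have "\<dots> = f t - f 0" by (rule sum_lessThan_telescope)
    also have "\<dots> = g X - g C" using gt unfolding f_def by simp
    finally show ?thesis .
  qed
  have "g X - g C \<le> (\<Sum>i\<in>{1..t}. g (C \<union> {vs ! (i - 1)}) - g C + p)"
    unfolding tele[symmetric] by (rule sum_mono) (use tc in blast)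
  also have "\<dots> = (\<Sum>k<t. g (C \<union> {vs ! k}) - g C) + real t * p"
    using sum.atLeast1_atMost_eq[of "\<lambda>i. g (C \<union> {vs ! (i - 1)}) - g C + p" t]
    by (simp add: sum.distrib)
  also have "\<dots> \<le> (\<Sum>k<t. r * w (vs ! k)) + real t * p"
  proof -
    have "(\<Sum>k<t. g (C \<union> {vs ! k}) - g C) \<le> (\<Sum>k<t. r * w (vs ! k))"
    proof (rule sum_mono)
      fix k assume "k \<in> {..<t}"
      hence "k < length vs" using tlen by simp
      hence "vs ! k \<in> X - C" using vs Cs_feas by (metis DiffD1 DiffD2 DiffI nth_mem subsetD)
      hence "(g (C \<union> {vs ! k}) - g C) / w (vs ! k) \<le> r" and wk: "w (vs ! k) > 0"
        using bmax w1 unfolding r_def by force+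
      thus "g (C \<union> {vs ! k}) - g C \<le> r * w (vs ! k)" by (simp add: field_simps)
    qed
    thus ?thesis by simp
  qed
  also have "\<dots> \<le> r * wt w Cs + wt w Cs * p"
  proof -
    have wnn: "\<forall>v\<in>X. w v \<ge> 0" using w1 by force
    have "(\<Sum>k<t. w (vs ! k)) \<le> (\<Sum>k<length vs. w (vs ! k))"
      using tlen wnn vs Cs_feas by (intro sum_mono2) (auto, metis DiffD1 in_mono nth_mem)
    also have "\<dots> = sum w (set vs)"
      by (rule sum.reindex_bij_betw) (rule bij_betw_nth, use vs in auto)
    also have "\<dots> \<le> wt w Cs" unfolding wt_def using vs finCs wnn Cs_feas
      by (intro sum_mono2) auto
    finally have s1: "(\<Sum>k<t. w (vs ! k)) \<le> wt w Cs" .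
    have "real t \<le> real (length vs)" using tlen by simp
    also have "\<dots> = real (card (Cs - C))" using vs distinct_card by metis
    also have "\<dots> \<le> real (card Cs)" using finCs by (simp add: card_mono)
    also have "\<dots> = (\<Sum>v\<in>Cs. 1)" by simp
    also have "\<dots> \<le> wt w Cs" unfolding wt_def using w1 Cs_feas by (intro sum_mono) auto
    finally have s2: "real t \<le> wt w Cs" .
    have "(\<Sum>k<t. r * w (vs ! k)) = r * (\<Sum>k<t. w (vs ! k))" by (simp add: sum_distrib_left)
    also have "\<dots> \<le> r * wt w Cs" using s1 r0 by (rule mult_left_mono)
    finally show ?thesis using s2 p0 mult_right_mono[OF s2 p0] by linarith
  qed
  finally have "g X - g C - p * wt w Cs \<le> r * wt w Cs" by (simp add: algebra_simps)
  hence "w b * (g X - g C - p * wt w Cs) \<le> w b * (r * wt w Cs)" using wbpos by simp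
  also have "\<dots> = wt w Cs * (g (C \<union> {b}) - g C)" unfolding r_def using wbpos by simp
  finally show ?thesis .
qed

lemma reach_sub: "greedy_reach X w g C \<Longrightarrow> C \<subseteq> X"
  by (induction rule: greedy_reach.induct) auto

lemma exists_output:
  assumes finX: "finite X"
  shows "greedy_reach X w g C \<Longrightarrow> \<exists>C'. greedy_output X w g C'"
proof (induction "card (X - C)" arbitrary: C rule: less_induct)
  case less
  show ?case
  proof (cases "g C < g X")
    case False thus ?thesis using less.prems unfolding greedy_output_def by blast
  next
    case True
    have sub: "C \<subseteq> X" using less.prems by (rule reach_sub)
    have ne: "X - C \<noteq> {}" using True sub by auto
    define f where "f v = (g (C \<union> {v}) - g C) / w v" for v
    have fin: "finite (X - C)" using finX by simp
    have "Max (f ` (X - C)) \<in> f ` (X - C)" using fin ne by (intro Max_in) auto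
    then obtain b where b: "b \<in> X - C" "f b = Max (f ` (X - C))" by auto
    have "\<forall>v\<in>X - C. f v \<le> f b" using b fin by auto
    hence r: "greedy_reach X w g (C \<union> {b})"
      using greedy_reach.step[OF less.prems True b(1)] unfolding f_def by blast
    have "X - (C \<union> {b}) = (X - C) - {b}" by auto
    hence "card (X - (C \<union> {b})) < card (X - C)" using b(1) fin by (metis card_Diff1_less)
    thus ?thesis using less.hyps r by blast
  qed
qed

lemma reach_empty: "greedy_reach X w g C \<Longrightarrow> g {} = g X \<Longrightarrow> C = {}"
  by (induction rule: greedy_reach.induct) auto

theorem theorem1:
  fixes X :: "'a set" and w :: "'a \<Rightarrow> real" and g :: "'a set \<Rightarrow> real"
    and Cs :: "'a set" and p :: real
  assumes finX: "finite X" and neX: "X \<noteq> {}"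
    and wpos: "\<forall>v\<in>X. w v > 0"
    and wmin: "Min (w ` X) = 1"
    and gnonneg: "\<forall>A. A \<subseteq> X \<longrightarrow> g A \<ge> 0"
    and gmono: "\<forall>A B. A \<subseteq> B \<and> B \<subseteq> X \<longrightarrow> g A \<le> g B"
    and gempty: "g {} = 0"
    and Cs_feas: "Cs \<subseteq> X" "g Cs = g X"
    and Cs_opt: "\<forall>C. C \<subseteq> X \<and> g C = g X \<longrightarrow> wt w Cs \<le> wt w C"
    and cond_i: "\<forall>C. C \<subset> X \<and> g C < g X \<longrightarrow> (\<exists>v\<in>X - C. g (C \<union> {v}) - g C > 0)"
    and cond_ii: "order_condition X g Cs p"
  shows "(\<exists>C. greedy_output X w g C) \<and>
         (\<forall>C. greedy_output X w g C \<longrightarrow>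
            C \<subseteq> X \<and> g C = g X \<and>
            wt w C \<le> ((p + 1) * Max (w ` X) / min_gain X g
                      + (if g X - (p + 1) * wt w Cs \<le> 0 then 0
                         else ln ((g X - p * wt w Cs) / wt w Cs))) * wt w Cs)"
proof -
  have w1: "\<forall>v\<in>X. w v \<ge> 1"
  proof
    fix v assume "v \<in> X"
    hence "Min (w ` X) \<le> w v" using finX by simp
    thus "w v \<ge> 1" using wmin by simp
  qed
  have wnn: "\<forall>v\<in>X. w v \<ge> 0" using w1 by force
  have ex: "\<exists>C. greedy_output X w g C" using exists_output[OF finX] greedy_reach.start by blast
  have optnn: "wt w Cs \<ge> 0" unfolding wt_def using wnn Cs_feas by (intro sum_nonneg) auto
  have "\<forall>C. greedy_output X w g C \<longrightarrow>
            C \<subseteq> X \<and> g C = g X \<and>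
            wt w C \<le> ((p + 1) * Max (w ` X) / min_gain X g
                      + (if g X - (p + 1) * wt w Cs \<le> 0 then 0
                         else ln ((g X - p * wt w Cs) / wt w Cs))) * wt w Cs"
  proof (intro allI impI)
    fix C assume out: "greedy_output X w g C"
    have reach: "greedy_reach X w g C" using out unfolding greedy_output_def by blast
    have sub: "C \<subseteq> X" using reach by (rule reach_sub)
    have gC1: "\<not> g C < g X" using out unfolding greedy_output_def by blast
    have gC2: "g C \<le> g X" using sub gmono by blast
    have gC: "g C = g X" using gC1 gC2 by linarith
    have gX0: "g X \<ge> 0" using gnonneg by blast
    show "C \<subseteq> X \<and> g C = g X \<and>
            wt w C \<le> ((p + 1) * Max (w ` X) / min_gain X g
                      + (if g X - (p + 1) * wt w Cs \<le> 0 then 0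
                         else ln ((g X - p * wt w Cs) / wt w Cs))) * wt w Cs"
    proof (cases "g X = 0")
      case True
      have "C = {}" using reach_empty[OF reach] True gempty by simp
      moreover have "wt w Cs \<le> wt w {}" using Cs_opt[rule_format, of "{}"] True gempty by simp
      hence "wt w Cs = 0" using optnn by (simp add: wt_def)
      ultimately show ?thesis using sub gC by (simp add: wt_def)
    next
      case False
      hence gXp: "g X > 0" using gX0 by simp
      define opt where "opt = wt w Cs"
      have p0: "p \<ge> 0"
      proof -
        obtain vs where vs: "distinct vs" "set vs = Cs - {}" and
          tcond: "let t = (LEAST i. g (set (take i vs) \<union> {}) = g X) in
              \<forall>i\<in>{1..t}.
                g (set (take (i - 1) vs) \<union> {} \<union> {vs ! (i - 1)}) - g (set (take (i - 1) vs) \<union> {})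
                  \<le> g ({} \<union> {vs ! (i - 1)}) - g {} + p"
          using cond_ii neX unfolding order_condition_def by blast
        define t where "t = (LEAST i. g (set (take i vs) \<union> {}) = g X)"
        have "t \<noteq> 0"
        proof
          assume "t = 0"
          moreover have "g (set (take (length vs) vs) \<union> {}) = g X"
            using vs Cs_feas by simp
          hence "g (set (take t vs) \<union> {}) = g X" unfolding t_def by (rule LeastI)
          ultimately show False using gempty gXp by simp
        qed
        hence "1 \<in> {1..t}" by simp
        moreover have "\<forall>i\<in>{1..t}.
                g (set (take (i - 1) vs) \<union> {} \<union> {vs ! (i - 1)}) - g (set (take (i - 1) vs) \<union> {})
                  \<le> g ({} \<union> {vs ! (i - 1)}) - g {} + p" using tcond unfolding t_def Let_def .
        ultimately have "g (set (take (1 - 1) vs) \<union> {} \<union> {vs ! (1 - 1)}) - g (set (take (1 - 1) vs) \<union> {})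
                  \<le> g ({} \<union> {vs ! (1 - 1)}) - g {} + p" by (rule bspec[rotated])
        thus ?thesis by simp
      qed
      define S where "S = {g (C \<union> {v}) - g C | C v. C \<subset> X \<and> v \<in> X - C \<and> g (C \<union> {v}) > g C}"
      have dS: "min_gain X g = Min S" unfolding min_gain_def S_def by simp
      have finS: "finite S"
      proof -
        have "S \<subseteq> (\<lambda>(C, v). g (C \<union> {v}) - g C) ` (Pow X \<times> X)"
        proof
          fix x assume "x \<in> S"
          then obtain C v where "x = g (C \<union> {v}) - g C" "C \<subset> X" "v \<in> X - C"
            unfolding S_def by blast
          thus "x \<in> (\<lambda>(C, v). g (C \<union> {v}) - g C) ` (Pow X \<times> X)"
            by (intro rev_image_eqI[of "(C, v)"]) auto
        qed
        moreover have "finite ((\<lambda>(C, v). g (C \<union> {v}) - g C) ` (Pow X \<times> X))" using finX by simp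
        ultimately show ?thesis by (rule finite_subset)
      qed
      have neS: "S \<noteq> {}"
      proof -
        have "{} \<subset> X \<and> g {} < g X" using neX gXp gempty by auto
        then obtain v where "v \<in> X - {}" "g ({} \<union> {v}) - g {} > 0" using cond_i by blast
        thus ?thesis unfolding S_def using neX by auto
      qed
      define \<delta> where "\<delta> = min_gain X g"
      have dpos: "\<delta> > 0" using Min_in[OF finS neS] unfolding \<delta>_def dS S_def by auto
      have dle: "\<And>x. x \<in> S \<Longrightarrow> \<delta> \<le> x" unfolding \<delta>_def dS using finS by simp
      define M where "M = Max (w ` X)"
      have Mge: "\<And>v. v \<in> X \<Longrightarrow> w v \<le> M" unfolding M_def using finX by simp
      have optpos: "opt > 0"
      proof -
        have "Cs \<noteq> {}" using Cs_feas gXp gempty by auto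
        then obtain x where x: "x \<in> Cs" by auto
        have "w x \<le> opt" unfolding opt_def wt_def using x wnn Cs_feas finX finite_subset
          by (intro member_le_sum) auto
        thus ?thesis using w1 x Cs_feas by force
      qed
      define D where "D = M / \<delta>"
      define \<Phi> where "\<Phi> R = opt*ln(max R opt/opt) + D*min R opt" for R
      define R where "R A = g X - g A - p*opt" for A
      have main: "greedy_reach X w g A \<Longrightarrow> wt w A \<le> \<Phi> (R {}) - \<Phi> (R A)" for A
      proof (induction rule: greedy_reach.induct)
        case start
        then show ?case by (simp add: wt_def)
      next
        case (step A b)
        have Asub: "A \<subseteq> X" using step.hyps(1) by (rule reach_sub)
        hence Apsub: "A \<subset> X" using step.hyps(2) by auto
        have finA: "finite A" using Asub finX finite_subset by blast
        have bA: "b \<notin> A" "b \<in> X" using step.hyps(3) by auto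
        have wb: "w b > 0" using wpos bA by simp
        obtain v0 where v0: "v0 \<in> X - A" "g (A \<union> {v0}) - g A > 0" using cond_i Apsub step.hyps(2) by blast
        have "(g (A \<union> {v0}) - g A) / w v0 > 0" using v0 wpos by simp
        hence "(g (A \<union> {b}) - g A) / w b > 0" using step.hyps(4) v0 by force
        hence dpos': "g (A \<union> {b}) - g A > 0" using wb by (simp add: zero_less_divide_iff)
        hence inS: "g (A \<union> {b}) - g A \<in> S" unfolding S_def using Apsub step.hyps(3) by auto
        hence dl: "\<delta> \<le> g (A \<union> {b}) - g A" by (rule dle)
        have c1: "w b \<le> D * (R A - R (A \<union> {b}))"
        proof -
          have "R A - R (A \<union> {b}) = g (A \<union> {b}) - g A" unfolding R_def by simp
          moreover have "w b \<le> M" using Mge bA by simp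
          moreover have "M \<le> M / \<delta> * (g (A \<union> {b}) - g A)"
          proof -
            have "1 \<le> (g (A \<union> {b}) - g A) / \<delta>" using dl dpos by simp
            hence "M * 1 \<le> M * ((g (A \<union> {b}) - g A) / \<delta>)" using wb \<open>w b \<le> M\<close>
              by (intro mult_left_mono) auto
            thus ?thesis by simp
          qed
          ultimately show ?thesis unfolding D_def by simp
        qed
        have c2: "w b * R A \<le> opt * (R A - R (A \<union> {b}))"
          using step_bound[OF finX w1 gmono Cs_feas cond_i cond_ii p0 Apsub step.hyps(2,3,4)]
          unfolding R_def opt_def by simp
        have c3: "R (A \<union> {b}) < R A" unfolding R_def using dpos' by simp
        have "w b \<le> \<Phi> (R A) - \<Phi> (R (A \<union> {b}))"
          unfolding \<Phi>_def by (rule phi_step[OF optpos wb c3 c1 c2])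
        moreover have "wt w (A \<union> {b}) = wt w A + w b" unfolding wt_def using finA bA by simp
        ultimately show ?case using step.IH by simp
      qed
      have fin: "wt w C \<le> \<Phi> (R {}) - \<Phi> (R C)" using main[OF reach] .
      have RC: "R C = - p * opt" unfolding R_def using gC by simp
      have "p * opt \<ge> 0" using p0 optpos by simp
      hence po: "- p * opt \<le> opt" using optpos by simp
      have PC: "\<Phi> (R C) = - D * p * opt" unfolding \<Phi>_def RC using po optpos
        by (simp add: max_def min_def)
      have R0: "R {} = g X - p * opt" unfolding R_def using gempty by simp
      have M0: "M \<ge> 0"
      proof -
        obtain v where "v \<in> X" using neX by blast
        thus ?thesis using Mge[of v] wnn by force
      qed
      have D0: "D \<ge> 0" unfolding D_def using dpos M0 by simp
      have bound: "\<Phi> (R {}) - \<Phi> (R C) \<le> ((p + 1) * M / \<delta>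
                      + (if g X - (p + 1) * opt \<le> 0 then 0
                         else ln ((g X - p * opt) / opt))) * opt"
      proof (cases "g X - (p + 1) * opt \<le> 0")
        case True
        hence "R {} \<le> opt" unfolding R0 by (simp add: algebra_simps)
        hence "\<Phi> (R {}) = D * R {}" unfolding \<Phi>_def using optpos by (simp add: max_def min_def)
        hence "\<Phi> (R {}) - \<Phi> (R C) = D * (R {} + p * opt)" using PC by (simp add: algebra_simps)
        also have "\<dots> \<le> D * ((p+1) * opt)" using \<open>R {} \<le> opt\<close> D0
          by (intro mult_left_mono) (auto simp: algebra_simps)
        also have "D * ((p+1) * opt) = ((p + 1) * M / \<delta>) * opt" unfolding D_def by simp
        finally show ?thesis using True by simp
      next
        case False
        hence "R {} > opt" unfolding R0 by (simp add: algebra_simps)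
        hence "\<Phi> (R {}) = opt * ln (R {} / opt) + D * opt" unfolding \<Phi>_def using optpos by (simp add: max_def min_def)
        hence "\<Phi> (R {}) = opt * ln ((g X - p * opt) / opt) + D * opt" unfolding R0 .
        hence "\<Phi> (R {}) - \<Phi> (R C) = opt * ln ((g X - p * opt) / opt) + D * (p + 1) * opt"
          using PC by (simp add: algebra_simps)
        thus ?thesis using False unfolding D_def by (simp add: algebra_simps)
      qed
      show ?thesis using sub gC fin bound unfolding opt_def M_def \<delta>_def by linarith
    qed
  qed
  with ex show ?thesis by blast
qed

end
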